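(* Assume $b_1<n^*$, $b_2<m^*$ and $n^*=m^*$. Then for every minimum set cover $S^{\min}$ and every maximum set packing $T^{\max}$, $(\sigma^1(S^{\min},b_1),\sigma^2(T^{\max},b_2))$ is a Nash equilibrium of $\Gamma(b_1,b_2)$, and every Nash equilibrium $(\sigma^{1*},\sigma^{2*})$ satisfies $U_1(\sigma^{1*},\sigma^{2*})=\frac{b_1b_2}{n^*}$, $U_2(\sigma^{1*},\sigma^{2*})=b_2(1-\frac{b_1}{n^*})$ and $r(\sigma^{1*},\sigma^{2*})=\frac{b_1}{n^*}$.
   Context: Detection model: finite nonempty sets $\mathcal V$, $\mathcal E$, monitoring sets $\mathcal C_i\subseteq\mathcal E$ ($i\in\mathcal V$) with every $e\in\mathcal E$ in some $\mathcal C_i$; $\mathcal C_S=\bigcup_{i\in S}\mathcal C_i$; $F(S,T)=|\mathcal C_S\cap T|$. Set cover: $S\subseteq\mathcal V$ with $\mathcal C_S=\mathcal E$; $n^*$ = minimum size of a set cover; a minimum set cover is a set cover of size $n^*$. Set packing: $T\subseteq\mathcal E$ with $|\mathcal C_i\cap T|\le1$ for all $i$; $m^*$ = maximum size of a set packing; a maximum set packing is one of size $m^*$. Game $\Gamma(b_1,b_2)$ ($b_1,b_2$ positive integers): $\mathcal A_1=\{S\subseteq\mathcal V:|S|\le b_1\}$, $\mathcal A_2=\{T\subseteq\mathcal E:|T|\le b_2\}$; mixed strategies $\sigma^1\in\Delta(\mathcal A_1)$, $\sigma^2\in\Delta(\mathcal A_2)$ (independent); payoffs $U_1=\mathbb E[F(S,T)]$,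 $U_2=\mathbb E[|T|]-\mathbb E[F(S,T)]$; Nash equilibrium as usual. Expected detection rate $r(\sigma)=\mathbb E[F(S,T)/|T|]$. Cyclic strategies: for $S=\{i_1,\dots,i_n\}$ with $n\ge b_1$, $S^k=\{i_k,\dots,i_{k+b_1-1}\}$ (indices cyclic mod $n$), $k=1,\dots,n$, and $\sigma^1(S,b_1)$ puts probability $1/n$ on each $S^k$; for $T=\{e_1,\dots,e_m\}$ with $m\ge b_2$, $T^l=\{e_l,\dots,e_{l+b_2-1}\}$ cyclically and $\sigma^2(T,b_2)$ puts probability $1/m$ on each $T^l$. *)

theory Defs
  imports "HOL-Probability.Probability"
begin

definition detection_model :: "'v set \<Rightarrow> 'e set \<Rightarrow> ('v \<Rightarrow> 'e set) \<Rightarrow> bool" where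
  "detection_model V E C \<longleftrightarrow> finite V \<and> finite E \<and> V \<noteq> {} \<and> E \<noteq> {} \<and>
     (\<forall>i\<in>V. C i \<subseteq> E) \<and> (\<forall>e\<in>E. \<exists>i\<in>V. e \<in> C i)"

definition covered :: "('v \<Rightarrow> 'e set) \<Rightarrow> 'v set \<Rightarrow> 'e set" where
  "covered C S = (\<Union>i\<in>S. C i)"

definition Fdet :: "('v \<Rightarrow> 'e set) \<Rightarrow> 'v set \<Rightarrow> 'e set \<Rightarrow> nat" where
  "Fdet C S T = card (covered C S \<inter> T)"

definition is_set_cover :: "'v set \<Rightarrow> 'e set \<Rightarrow> ('v \<Rightarrow> 'e set) \<Rightarrow> 'v set \<Rightarrow> bool" where
  "is_set_cover V E C S \<longleftrightarrow> S \<subseteq> V \<and> covered C S = E"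

definition min_cover_size :: "'v set \<Rightarrow> 'e set \<Rightarrow> ('v \<Rightarrow> 'e set) \<Rightarrow> nat" where
  "min_cover_size V E C = Min (card ` {S. is_set_cover V E C S})"

definition is_min_set_cover :: "'v set \<Rightarrow> 'e set \<Rightarrow> ('v \<Rightarrow> 'e set) \<Rightarrow> 'v set \<Rightarrow> bool" where
  "is_min_set_cover V E C S \<longleftrightarrow> is_set_cover V E C S \<and> card S = min_cover_size V E C"

definition is_set_packing :: "'v set \<Rightarrow> 'e set \<Rightarrow> ('v \<Rightarrow> 'e set) \<Rightarrow> 'e set \<Rightarrow> bool" where
  "is_set_packing V E C T \<longleftrightarrow> T \<subseteq> E \<and> (\<forall>i\<in>V. card (C i \<inter> T) \<le> 1)"

definition max_packing_size :: "'v set \<Rightarrow> 'e set \<Rightarrow> ('v \<Rightarrow> 'e set) \<Rightarrow> nat" where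
  "max_packing_size V E C = Max (card ` {T. is_set_packing V E C T})"

definition is_max_set_packing :: "'v set \<Rightarrow> 'e set \<Rightarrow> ('v \<Rightarrow> 'e set) \<Rightarrow> 'e set \<Rightarrow> bool" where
  "is_max_set_packing V E C T \<longleftrightarrow> is_set_packing V E C T \<and> card T = max_packing_size V E C"

definition strat1 :: "'v set \<Rightarrow> nat \<Rightarrow> 'v set set" where
  "strat1 V b1 = {S. S \<subseteq> V \<and> card S \<le> b1}"

definition strat2 :: "'e set \<Rightarrow> nat \<Rightarrow> 'e set set" where
  "strat2 E b2 = {T. T \<subseteq> E \<and> card T \<le> b2}"

definition mixed :: "'a set \<Rightarrow> 'a pmf \<Rightarrow> bool" where
  "mixed A \<sigma> \<longleftrightarrow> set_pmf \<sigma> \<subseteq> A"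

definition U1 :: "('v \<Rightarrow> 'e set) \<Rightarrow> 'v set pmf \<Rightarrow> 'e set pmf \<Rightarrow> real" where
  "U1 C \<sigma>1 \<sigma>2 = measure_pmf.expectation (pair_pmf \<sigma>1 \<sigma>2) (\<lambda>(S, T). real (Fdet C S T))"

definition U2 :: "('v \<Rightarrow> 'e set) \<Rightarrow> 'v set pmf \<Rightarrow> 'e set pmf \<Rightarrow> real" where
  "U2 C \<sigma>1 \<sigma>2 = measure_pmf.expectation (pair_pmf \<sigma>1 \<sigma>2) (\<lambda>(S, T). real (card T))
                  - U1 C \<sigma>1 \<sigma>2"

text \<open>Expected detection rate; for T = {} the ratio is 0/0 = 0 by Isabelle convention.\<close>
definition det_rate :: "('v \<Rightarrow> 'e set) \<Rightarrow> 'v set pmf \<Rightarrow> 'e set pmf \<Rightarrow> real" where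
  "det_rate C \<sigma>1 \<sigma>2 = measure_pmf.expectation (pair_pmf \<sigma>1 \<sigma>2)
       (\<lambda>(S, T). real (Fdet C S T) / real (card T))"

definition nash_eq :: "'v set \<Rightarrow> 'e set \<Rightarrow> ('v \<Rightarrow> 'e set) \<Rightarrow> nat \<Rightarrow> nat
                        \<Rightarrow> 'v set pmf \<Rightarrow> 'e set pmf \<Rightarrow> bool" where
  "nash_eq V E C b1 b2 \<sigma>1 \<sigma>2 \<longleftrightarrow>
     mixed (strat1 V b1) \<sigma>1 \<and> mixed (strat2 E b2) \<sigma>2 \<and>
     (\<forall>\<tau>1. mixed (strat1 V b1) \<tau>1 \<longrightarrow> U1 C \<tau>1 \<sigma>2 \<le> U1 C \<sigma>1 \<sigma>2) \<and>
     (\<forall>\<tau>2. mixed (strat2 E b2) \<tau>2 \<longrightarrow> U2 C \<sigma>1 \<tau>2 \<le> U2 C \<sigma>1 \<sigma>2)"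

text \<open>Cyclic strategy: for an enumeration xs = [x_1,...,x_n] of a set, the window
  X^k = {x_k, ..., x_(k+b-1)} (indices cyclic), each chosen with probability 1/n.
  Indices here are 0-based.\<close>
definition cyc_window :: "'a list \<Rightarrow> nat \<Rightarrow> nat \<Rightarrow> 'a set" where
  "cyc_window xs b k = {xs ! ((k + j) mod length xs) | j. j < b}"

definition cyclic_strategy :: "'a list \<Rightarrow> nat \<Rightarrow> 'a set pmf" where
  "cyclic_strategy xs b = map_pmf (cyc_window xs b) (pmf_of_set {..<length xs})"

end

theory Submission
  imports Defs
begin



lemma fubini_pmf:
  fixes f :: "'a \<times> 'b \<Rightarrow> real"
  assumes "finite (set_pmf p)" "finite (set_pmf q)"
  shows "measure_pmf.expectation (pair_pmf p q) f =
         measure_pmf.expectation p (\<lambda>a. measure_pmf.expectation q (\<lambda>b. f (a,b)))"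
    and "measure_pmf.expectation (pair_pmf p q) f =
         measure_pmf.expectation q (\<lambda>b. measure_pmf.expectation p (\<lambda>a. f (a,b)))"
proof -
  let ?A = "set_pmf p" and ?B = "set_pmf q"
  have e: "measure_pmf.expectation (pair_pmf p q) f = (\<Sum>x\<in>?A \<times> ?B. f x * pmf (pair_pmf p q) x)"
    by (rule integral_measure_pmf_real) (use assms in auto)
  have ia: "\<And>a. measure_pmf.expectation q (\<lambda>b. f (a,b)) = (\<Sum>b\<in>?B. f (a,b) * pmf q b)"
    by (rule integral_measure_pmf_real) (use assms in auto)
  have ib: "\<And>b. measure_pmf.expectation p (\<lambda>a. f (a,b)) = (\<Sum>a\<in>?A. f (a,b) * pmf p a)"
    by (rule integral_measure_pmf_real) (use assms in auto)
  have oa: "measure_pmf.expectation p (\<lambda>a. measure_pmf.expectation q (\<lambda>b. f (a,b)))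
       = (\<Sum>a\<in>?A. measure_pmf.expectation q (\<lambda>b. f (a,b)) * pmf p a)"
    by (rule integral_measure_pmf_real) (use assms in auto)
  have ob: "measure_pmf.expectation q (\<lambda>b. measure_pmf.expectation p (\<lambda>a. f (a,b)))
       = (\<Sum>b\<in>?B. measure_pmf.expectation p (\<lambda>a. f (a,b)) * pmf q b)"
    by (rule integral_measure_pmf_real) (use assms in auto)
  have s: "(\<Sum>x\<in>?A \<times> ?B. f x * pmf (pair_pmf p q) x) = (\<Sum>a\<in>?A. \<Sum>b\<in>?B. f (a,b) * (pmf p a * pmf q b))"
    unfolding sum.cartesian_product by (rule sum.cong) (auto simp: pmf_pair)
  show "measure_pmf.expectation (pair_pmf p q) f =
         measure_pmf.expectation p (\<lambda>a. measure_pmf.expectation q (\<lambda>b. f (a,b)))"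
    unfolding e s by (subst oa) (simp add: ia sum_distrib_right sum_distrib_left mult_ac)
  show "measure_pmf.expectation (pair_pmf p q) f =
         measure_pmf.expectation q (\<lambda>b. measure_pmf.expectation p (\<lambda>a. f (a,b)))"
    unfolding e s by (subst ob) (subst sum.swap, simp add: ib sum_distrib_right sum_distrib_left mult_ac)
qed

lemma exp_mono_pmf:
  fixes f g :: "'a \<Rightarrow> real"
  assumes "finite (set_pmf M)" "\<And>x. x \<in> set_pmf M \<Longrightarrow> f x \<le> g x"
  shows "measure_pmf.expectation M f \<le> measure_pmf.expectation M g"
  by (rule integral_mono_AE) (use assms in \<open>auto simp: AE_measure_pmf_iff integrable_measure_pmf_finite\<close>)

lemma exp_cong_pmf:
  fixes f g :: "'a \<Rightarrow> real"
  assumes "\<And>x. x \<in> set_pmf M \<Longrightarrow> f x = g x"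
  shows "measure_pmf.expectation M f = measure_pmf.expectation M g"
  by (rule integral_cong_AE) (use assms in \<open>auto simp: AE_measure_pmf_iff\<close>)

lemma exp_const_pmf: "measure_pmf.expectation M (\<lambda>x. c::real) = c"
  by simp



lemma modH1:
  fixes a c n p :: nat
  assumes "a < n" "c < n" "(a + c) mod n = p"
  shows "a = (p + (n - c)) mod n"
proof -
  have "a = (a + c + (n - c)) mod n" using assms by simp
  also have "\<dots> = ((a + c) mod n + (n - c)) mod n" by (simp add: mod_add_left_eq)
  finally show ?thesis using assms by simp
qed

lemma modH2:
  fixes c n p :: nat
  assumes "c < n" "p < n"
  shows "((p + (n - c)) mod n + c) mod n = p"
proof -
  have "((p + (n - c)) mod n + c) mod n = (p + (n - c) + c) mod n" by (simp add: mod_add_left_eq)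
  also have "\<dots> = (p + n) mod n" using assms by simp
  finally show ?thesis using assms by simp
qed

lemma in_window: "x \<in> cyc_window xs b k \<longleftrightarrow> (\<exists>j<b. x = xs ! ((k + j) mod length xs))"
  unfolding cyc_window_def by auto

lemma window_image: "cyc_window xs b k = (\<lambda>j. xs ! ((k + j) mod length xs)) ` {..<b}"
  unfolding cyc_window_def by auto

lemma window_sub: "xs \<noteq> [] \<Longrightarrow> cyc_window xs b k \<subseteq> set xs"
  unfolding cyc_window_def by auto

lemma window_card: "card (cyc_window xs b k) \<le> b"
  unfolding window_image by (metis card_image_le card_lessThan finite_lessThan)

lemma window_count:
  assumes "distinct xs" "b \<le> length xs" "x \<in> set xs"
  shows "card {k\<in>{..<length xs}. x \<in> cyc_window xs b k} = b"
proof -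
  define n where "n = length xs"
  obtain p where p: "p < n" "xs ! p = x" using assms(3) unfolding n_def by (metis in_set_conv_nth)
  have n0: "0 < n" using p by simp
  have key: "\<And>k j. k < n \<Longrightarrow> j < n \<Longrightarrow> (xs ! ((k + j) mod n) = x) \<longleftrightarrow> (k + j) mod n = p"
    using p assms(1) n0 unfolding n_def by (metis mod_less_divisor nth_eq_iff_index_eq)
  have eq: "{k\<in>{..<n}. x \<in> cyc_window xs b k} = (\<lambda>j. (p + (n - j)) mod n) ` {..<b}"
  proof (rule set_eqI, rule iffI)
    fix k assume "k \<in> {k\<in>{..<n}. x \<in> cyc_window xs b k}"
    then obtain j where j: "j < b" "k < n" "x = xs ! ((k + j) mod n)"
      unfolding in_window n_def by auto
    have "j < n" using j assms(2) unfolding n_def by simp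
    then have "(k + j) mod n = p" using key j by auto
    then have "k = (p + (n - j)) mod n" using modH1 j \<open>j < n\<close> by blast
    then show "k \<in> (\<lambda>j. (p + (n - j)) mod n) ` {..<b}" using j by auto
  next
    fix k assume "k \<in> (\<lambda>j. (p + (n - j)) mod n) ` {..<b}"
    then obtain j where j: "j < b" "k = (p + (n - j)) mod n" by auto
    have jn: "j < n" using j assms(2) unfolding n_def by simp
    have kn: "k < n" using j n0 by simp
    have "(k + j) mod n = p" using modH2 jn p j by simp
    then have "xs ! ((k + j) mod n) = x" using p by simp
    then show "k \<in> {k\<in>{..<n}. x \<in> cyc_window xs b k}"
      using kn j unfolding in_window n_def by auto
  qed
  have inj: "inj_on (\<lambda>j. (p + (n - j)) mod n) {..<b}"
  proof (rule inj_onI)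
    fix j1 j2 assume j: "j1 \<in> {..<b}" "j2 \<in> {..<b}" "(p + (n - j1)) mod n = (p + (n - j2)) mod n"
    define k where "k = (p + (n - j1)) mod n"
    have j1n: "j1 < n" and j2n: "j2 < n" using j assms(2) unfolding n_def by auto
    have kn: "k < n" using n0 k_def by simp
    have "(k + j1) mod n = p" using modH2 j1n p unfolding k_def by simp
    then have a: "j1 = (p + (n - k)) mod n" using modH1[of j1 n k p] j1n kn by (simp add: add.commute)
    have "(k + j2) mod n = p" using modH2 j2n p j(3) unfolding k_def by simp
    then have "j2 = (p + (n - k)) mod n" using modH1[of j2 n k p] j2n kn by (simp add: add.commute)
    then show "j1 = j2" using a by simp
  qed
  show ?thesis unfolding n_def[symmetric] eq using card_image[OF inj] by simp
qed

lemma double_count: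
  assumes "finite S" "finite K" "\<And>k. k \<in> K \<Longrightarrow> P k \<subseteq> S"
  shows "(\<Sum>k\<in>K. card (P k)) = (\<Sum>e\<in>S. card {k\<in>K. e \<in> P k})"
proof -
  have "\<And>k. k \<in> K \<Longrightarrow> card (P k) = (\<Sum>e\<in>S. if e \<in> P k then 1 else 0)"
  proof -
    fix k assume "k \<in> K"
    then have "P k = {e\<in>S. e \<in> P k}" using assms(3) by auto
    then have "card (P k) = (\<Sum>e\<in>{e\<in>S. e \<in> P k}. 1)" by simp
    also have "\<dots> = (\<Sum>e\<in>S. if e \<in> P k then 1 else 0)" using sum.inter_filter[OF assms(1), of "\<lambda>_. (1::nat)" "\<lambda>e. e \<in> P k"] by simp
    finally show "card (P k) = (\<Sum>e\<in>S. if e \<in> P k then 1 else 0)" .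
  qed
  then have "(\<Sum>k\<in>K. card (P k)) = (\<Sum>k\<in>K. \<Sum>e\<in>S. if e \<in> P k then 1 else 0)" by simp
  also have "\<dots> = (\<Sum>e\<in>S. \<Sum>k\<in>K. if e \<in> P k then 1 else 0)" by (rule sum.swap)
  also have "\<dots> = (\<Sum>e\<in>S. card {k\<in>K. e \<in> P k})" using assms(2) by (simp add: sum.inter_filter[symmetric])
  finally show ?thesis .
qed



lemma cyc_set: "xs \<noteq> [] \<Longrightarrow> set_pmf (cyclic_strategy xs b) = cyc_window xs b ` {..<length xs}"
  unfolding cyclic_strategy_def by (subst set_map_pmf, subst set_pmf_of_set) auto

lemma cyc_finite: "xs \<noteq> [] \<Longrightarrow> finite (set_pmf (cyclic_strategy xs b))"
  by (simp add: cyc_set)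

lemma cyc_exp:
  fixes g :: "'a set \<Rightarrow> real"
  shows "xs \<noteq> [] \<Longrightarrow> measure_pmf.expectation (cyclic_strategy xs b) g
       = (\<Sum>k<length xs. g (cyc_window xs b k)) / length xs"
  unfolding cyclic_strategy_def by (subst integral_map_pmf, subst integral_pmf_of_set) auto

lemma win_sum:
  assumes "distinct xs" "b \<le> length xs"
  shows "(\<Sum>k<length xs. card (A \<inter> cyc_window xs b k)) = b * card (A \<inter> set xs)"
proof (cases "xs = []")
  case True then show ?thesis by simp
next
  case False
  have "(\<Sum>k<length xs. card (A \<inter> cyc_window xs b k))
      = (\<Sum>e\<in>A \<inter> set xs. card {k\<in>{..<length xs}. e \<in> A \<inter> cyc_window xs b k})"
    by (rule double_count) (use window_sub[OF False] in auto)
  also have "\<dots> = (\<Sum>e\<in>A \<inter> set xs. b)"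
  proof (rule sum.cong)
    fix e assume e: "e \<in> A \<inter> set xs"
    then have "{k\<in>{..<length xs}. e \<in> A \<inter> cyc_window xs b k} = {k\<in>{..<length xs}. e \<in> cyc_window xs b k}"
      by auto
    then show "card {k\<in>{..<length xs}. e \<in> A \<inter> cyc_window xs b k} = b"
      using window_count[OF assms] e by simp
  qed simp
  finally show ?thesis by simp
qed

lemma cover_count:
  assumes "distinct xs" "b \<le> length xs" "finite T" "T \<subseteq> covered C (set xs)"
  shows "b * card T \<le> (\<Sum>k<length xs. card (covered C (cyc_window xs b k) \<inter> T))"
proof -
  have "(\<Sum>k<length xs. card (covered C (cyc_window xs b k) \<inter> T))
      = (\<Sum>e\<in>T. card {k\<in>{..<length xs}. e \<in> covered C (cyc_window xs b k) \<inter> T})"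
    by (rule double_count) (use assms in auto)
  also have "\<dots> \<ge> (\<Sum>e\<in>T. b)"
  proof (rule sum_mono)
    fix e assume e: "e \<in> T"
    then obtain i where i: "i \<in> set xs" "e \<in> C i" using assms(4) unfolding covered_def by auto
    have "{k\<in>{..<length xs}. i \<in> cyc_window xs b k} \<subseteq> {k\<in>{..<length xs}. e \<in> covered C (cyc_window xs b k) \<inter> T}"
      using i e unfolding covered_def by auto
    then have "card {k\<in>{..<length xs}. i \<in> cyc_window xs b k} \<le> card {k\<in>{..<length xs}. e \<in> covered C (cyc_window xs b k) \<inter> T}"
      by (intro card_mono) auto
    then show "b \<le> card {k\<in>{..<length xs}. e \<in> covered C (cyc_window xs b k) \<inter> T}"
      using window_count[OF assms(1,2) i(1)] by simp
  qed
  finally show ?thesis by (simp add: mult.commute)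
qed

lemma cyc_card_exp:
  assumes "distinct xs" "b \<le> length xs" "xs \<noteq> []"
  shows "measure_pmf.expectation (cyclic_strategy xs b) (\<lambda>T. real (card T)) = real b"
proof -
  have "(\<Sum>k<length xs. card (cyc_window xs b k)) = (\<Sum>k<length xs. card (set xs \<inter> cyc_window xs b k))"
    using window_sub[OF assms(3)] by (intro sum.cong) (auto simp: Int_absorb1)
  also have "\<dots> = b * length xs" using win_sum[OF assms(1,2), of "set xs"] assms(1)
    by (simp add: distinct_card)
  finally have "(\<Sum>k<length xs. real (card (cyc_window xs b k))) = real b * real (length xs)"
    by (metis of_nat_mult of_nat_sum)
  then show ?thesis using assms(3) by (simp add: cyc_exp)
qed

lemma mixed_finite: "finite A \<Longrightarrow> mixed A \<sigma> \<Longrightarrow> finite (set_pmf \<sigma>)"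
  unfolding mixed_def using finite_subset by blast

lemma strat1_finite: "finite V \<Longrightarrow> finite (strat1 V b)"
  unfolding strat1_def by (rule finite_subset[of _ "Pow V"]) auto

lemma strat2_finite: "finite E \<Longrightarrow> finite (strat2 E b)"
  unfolding strat2_def by (rule finite_subset[of _ "Pow E"]) auto

lemma U2_eq: "U2 C \<sigma>1 \<sigma>2 = measure_pmf.expectation \<sigma>2 (\<lambda>T. real (card T)) - U1 C \<sigma>1 \<sigma>2"
  unfolding U2_def split_def using expectation_pair_pmf_snd[where f="\<lambda>T. real (card T)" and p=\<sigma>1 and q=\<sigma>2] by simp

lemma card_exp_le:
  assumes "finite E" "mixed (strat2 E b2) \<sigma>2"
  shows "measure_pmf.expectation \<sigma>2 (\<lambda>T. real (card T)) \<le> real b2"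
proof -
  have "measure_pmf.expectation \<sigma>2 (\<lambda>T. real (card T)) \<le> measure_pmf.expectation \<sigma>2 (\<lambda>T. real b2)"
    by (rule exp_mono_pmf) (use mixed_finite[OF strat2_finite[OF assms(1)] assms(2)] assms(2) in \<open>auto simp: mixed_def strat2_def\<close>)
  then show ?thesis by simp
qed

lemma G1:
  assumes dm: "detection_model V E C" and ys: "distinct ys" "is_set_packing V E C (set ys)"
    and b: "b2 \<le> length ys" and ne: "ys \<noteq> []" and m: "mixed (strat1 V b1) \<sigma>1"
  shows "U1 C \<sigma>1 (cyclic_strategy ys b2) \<le> real b1 * real b2 / real (length ys)"
proof -
  have fV: "finite V" using dm unfolding detection_model_def by simp
  have f1: "finite (set_pmf \<sigma>1)" using mixed_finite[OF strat1_finite[OF fV] m] .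
  have "U1 C \<sigma>1 (cyclic_strategy ys b2) =
     measure_pmf.expectation \<sigma>1 (\<lambda>S. measure_pmf.expectation (cyclic_strategy ys b2) (\<lambda>T. real (Fdet C S T)))"
    unfolding U1_def by (subst fubini_pmf(1)[OF f1 cyc_finite[OF ne]]) simp
  also have "\<dots> \<le> measure_pmf.expectation \<sigma>1 (\<lambda>S. real b1 * real b2 / real (length ys))"
  proof (rule exp_mono_pmf[OF f1])
    fix S assume "S \<in> set_pmf \<sigma>1"
    then have S: "S \<subseteq> V" "card S \<le> b1" using m unfolding mixed_def strat1_def by auto
    have fS: "finite S" using S fV finite_subset by blast
    show "measure_pmf.expectation (cyclic_strategy ys b2) (\<lambda>T. real (Fdet C S T)) \<le> real b1 * real b2 / real (length ys)"
    proof -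
      note False = ne
      have cs: "covered C S \<inter> set ys = (\<Union>i\<in>S. C i \<inter> set ys)" unfolding covered_def by auto
      have "card (covered C S \<inter> set ys) \<le> (\<Sum>i\<in>S. card (C i \<inter> set ys))"
        unfolding cs using fS by (rule card_UN_le)
      also have "\<dots> \<le> (\<Sum>i\<in>S. 1)"
        using ys(2) S(1) unfolding is_set_packing_def by (intro sum_mono) auto
      also have "\<dots> \<le> b1" using S by simp
      finally have c: "card (covered C S \<inter> set ys) \<le> b1" .
      have "(\<Sum>k<length ys. real (Fdet C S (cyc_window ys b2 k))) = real (b2 * card (covered C S \<inter> set ys))"
        using win_sum[OF ys(1) b, of "covered C S"] unfolding Fdet_def by (metis of_nat_sum)
      also have "\<dots> \<le> real b1 * real b2"
      proof -
        have x: "real (card (covered C S \<inter> set ys)) \<le> real b1" using c by simp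
        show ?thesis using mult_left_mono[OF x, of "real b2"] by (simp add: mult.commute)
      qed
      finally show ?thesis using False by (simp add: cyc_exp divide_right_mono)
    qed
  qed
  finally show ?thesis by simp
qed

lemma G2:
  assumes dm: "detection_model V E C" and xs: "distinct xs" "is_set_cover V E C (set xs)"
    and b: "b1 \<le> length xs" and ne: "xs \<noteq> []" and m: "mixed (strat2 E b2) \<sigma>2"
  shows "real b1 / real (length xs) * measure_pmf.expectation \<sigma>2 (\<lambda>T. real (card T))
           \<le> U1 C (cyclic_strategy xs b1) \<sigma>2"
proof -
  have fE: "finite E" using dm unfolding detection_model_def by simp
  have f2: "finite (set_pmf \<sigma>2)" using mixed_finite[OF strat2_finite[OF fE] m] .
  have "U1 C (cyclic_strategy xs b1) \<sigma>2 =
     measure_pmf.expectation \<sigma>2 (\<lambda>T. measure_pmf.expectation (cyclic_strategy xs b1) (\<lambda>S. real (Fdet C S T)))"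
    unfolding U1_def by (subst fubini_pmf(2)[OF cyc_finite[OF ne] f2]) simp
  also have "\<dots> \<ge> measure_pmf.expectation \<sigma>2 (\<lambda>T. real b1 / real (length xs) * real (card T))"
  proof (rule exp_mono_pmf[OF f2])
    fix T assume "T \<in> set_pmf \<sigma>2"
    then have T: "T \<subseteq> E" using m unfolding mixed_def strat2_def by auto
    have fT: "finite T" using T fE finite_subset by blast
    have Tc: "T \<subseteq> covered C (set xs)" using xs(2) T unfolding is_set_cover_def by simp
    show "real b1 / real (length xs) * real (card T) \<le> measure_pmf.expectation (cyclic_strategy xs b1) (\<lambda>S. real (Fdet C S T))"
    proof -
      note False = ne
      have "real (b1 * card T) \<le> (\<Sum>k<length xs. real (Fdet C (cyc_window xs b1 k) T))"
        using cover_count[OF xs(1) b fT Tc] unfolding Fdet_def by (metis of_nat_le_iff of_nat_sum)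
      then show ?thesis using False by (simp add: cyc_exp divide_right_mono)
    qed
  qed
  finally show ?thesis by (simp add: integral_mult_right_zero)
qed



lemma cyc_mixed1:
  assumes "set xs \<subseteq> V" "xs \<noteq> []"
  shows "mixed (strat1 V b) (cyclic_strategy xs b)"
  unfolding mixed_def strat1_def cyc_set[OF assms(2)] using window_sub[OF assms(2)] window_card assms(1) by blast

lemma cyc_mixed2:
  assumes "set xs \<subseteq> E" "xs \<noteq> []"
  shows "mixed (strat2 E b) (cyclic_strategy xs b)"
  unfolding mixed_def strat2_def cyc_set[OF assms(2)] using window_sub[OF assms(2)] window_card assms(1) by blast

lemma exists_min_cover:
  assumes "detection_model V E C"
  shows "\<exists>xs. distinct xs \<and> is_min_set_cover V E C (set xs)"
proof -
  let ?F = "{S. is_set_cover V E C S}"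
  have fV: "finite V" using assms unfolding detection_model_def by simp
  have fin: "finite ?F" by (rule finite_subset[of _ "Pow V"]) (use fV in \<open>auto simp: is_set_cover_def\<close>)
  have "V \<in> ?F" using assms unfolding detection_model_def is_set_cover_def covered_def by blast
  then have "min_cover_size V E C \<in> card ` ?F" unfolding min_cover_size_def using fin by (intro Min_in) auto
  then obtain S where S: "is_set_cover V E C S" "card S = min_cover_size V E C" by auto
  have "finite S" using S fV unfolding is_set_cover_def using finite_subset by blast
  then obtain xs where "set xs = S" "distinct xs" using finite_distinct_list by blast
  then show ?thesis using S unfolding is_min_set_cover_def by blast
qed

lemma exists_max_packing:
  assumes "detection_model V E C"
  shows "\<exists>xs. distinct xs \<and> is_max_set_packing V E C (set xs)"
proof -
  let ?F = "{T. is_set_packing V E C T}"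
  have fE: "finite E" using assms unfolding detection_model_def by simp
  have fin: "finite ?F" by (rule finite_subset[of _ "Pow E"]) (use fE in \<open>auto simp: is_set_packing_def\<close>)
  have "{} \<in> ?F" unfolding is_set_packing_def by simp
  then have "max_packing_size V E C \<in> card ` ?F" unfolding max_packing_size_def using fin by (intro Max_in) auto
  then obtain S where S: "is_set_packing V E C S" "card S = max_packing_size V E C" by auto
  have "finite S" using S fE unfolding is_set_packing_def using finite_subset by blast
  then obtain xs where "set xs = S" "distinct xs" using finite_distinct_list by blast
  then show ?thesis using S unfolding is_max_set_packing_def by blast
qed

theorem mainTheorem10:
  fixes V :: "'v set" and E :: "'e set" and C :: "'v \<Rightarrow> 'e set" and b1 b2 :: nat
  assumes "detection_model V E C"
    and "0 < b1" and "0 < b2"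
    and "b1 < min_cover_size V E C"
    and "b2 < max_packing_size V E C"
    and "min_cover_size V E C = max_packing_size V E C"
  shows "(\<forall>xs ys. distinct xs \<and> is_min_set_cover V E C (set xs) \<and>
                 distinct ys \<and> is_max_set_packing V E C (set ys) \<longrightarrow>
             nash_eq V E C b1 b2 (cyclic_strategy xs b1) (cyclic_strategy ys b2))
       \<and> (\<forall>\<sigma>1 \<sigma>2. nash_eq V E C b1 b2 \<sigma>1 \<sigma>2 \<longrightarrow>
             U1 C \<sigma>1 \<sigma>2 = real b1 * real b2 / real (min_cover_size V E C) \<and>
             U2 C \<sigma>1 \<sigma>2 = real b2 * (1 - real b1 / real (min_cover_size V E C)) \<and>
             det_rate C \<sigma>1 \<sigma>2 = real b1 / real (min_cover_size V E C))"
proof -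
  note dm = assms(1)
  define n where "n = min_cover_size V E C"
  have n0: "0 < n" using assms(4) unfolding n_def by simp
  have b1n: "b1 < n" and b2n: "b2 < n" using assms(4,5,6) unfolding n_def by auto
  have fE: "finite E" using dm unfolding detection_model_def by simp
  define a where "a = real b1 / real n"
  have a0: "0 \<le> a" and a1: "a < 1" using b1n n0 unfolding a_def by (auto simp: divide_less_eq)
  have key: "\<And>xs ys. distinct xs \<Longrightarrow> is_min_set_cover V E C (set xs) \<Longrightarrow>
                 distinct ys \<Longrightarrow> is_max_set_packing V E C (set ys) \<Longrightarrow>
     length xs = n \<and> length ys = n \<and> xs \<noteq> [] \<and> ys \<noteq> [] \<and> set xs \<subseteq> V \<and> set ys \<subseteq> E
     \<and> is_set_cover V E C (set xs) \<and> is_set_packing V E C (set ys)"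
  proof -
    fix xs ys assume h: "distinct xs" "is_min_set_cover V E C (set xs)"
                 "distinct ys" "is_max_set_packing V E C (set ys)"
    have l1: "length xs = n" using h(1,2) unfolding is_min_set_cover_def n_def by (simp add: distinct_card[symmetric])
    have l2: "length ys = n" using h(3,4) assms(6) unfolding is_max_set_packing_def n_def by (simp add: distinct_card[symmetric])
    show "?thesis xs ys" using l1 l2 n0 h unfolding is_min_set_cover_def is_max_set_packing_def
        is_set_cover_def is_set_packing_def by auto
  qed
  have part1: "\<And>xs ys. distinct xs \<Longrightarrow> is_min_set_cover V E C (set xs) \<Longrightarrow>
                 distinct ys \<Longrightarrow> is_max_set_packing V E C (set ys) \<Longrightarrow>
     nash_eq V E C b1 b2 (cyclic_strategy xs b1) (cyclic_strategy ys b2)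
     \<and> U1 C (cyclic_strategy xs b1) (cyclic_strategy ys b2) = real b1 * real b2 / real n"
  proof -
    fix xs ys assume h: "distinct xs" "is_min_set_cover V E C (set xs)"
                 "distinct ys" "is_max_set_packing V E C (set ys)"
    note k = key[OF h]
    let ?s1 = "cyclic_strategy xs b1" and ?s2 = "cyclic_strategy ys b2"
    have m1: "mixed (strat1 V b1) ?s1" using cyc_mixed1 k by blast
    have m2: "mixed (strat2 E b2) ?s2" using cyc_mixed2 k by blast
    have ec2: "measure_pmf.expectation ?s2 (\<lambda>T. real (card T)) = real b2"
      using cyc_card_exp[OF h(3)] k b2n by simp
    have up: "U1 C ?s1 ?s2 \<le> real b1 * real b2 / real n"
      using G1[OF dm h(3)] k b2n m1 by simp
    have lo: "real b1 / real n * real b2 \<le> U1 C ?s1 ?s2"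
      using G2[OF dm h(1), of b1 b2 ?s2] k b1n m2 ec2 by simp
    have eq: "U1 C ?s1 ?s2 = real b1 * real b2 / real n" using up lo by simp
    have p1: "\<forall>\<tau>1. mixed (strat1 V b1) \<tau>1 \<longrightarrow> U1 C \<tau>1 ?s2 \<le> U1 C ?s1 ?s2"
      using G1[OF dm h(3)] k b2n eq by simp
    have p2: "\<forall>\<tau>2. mixed (strat2 E b2) \<tau>2 \<longrightarrow> U2 C ?s1 \<tau>2 \<le> U2 C ?s1 ?s2"
    proof (intro allI impI)
      fix \<tau>2 assume t: "mixed (strat2 E b2) \<tau>2"
      define Ec where "Ec = measure_pmf.expectation \<tau>2 (\<lambda>T. real (card T))"
      have g2: "a * Ec \<le> U1 C ?s1 \<tau>2" using G2[OF dm h(1), of b1 b2 \<tau>2] k b1n t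
        unfolding Ec_def a_def by simp
      have le: "Ec \<le> real b2" using card_exp_le[OF fE t] unfolding Ec_def .
      have "(1 - a) * Ec \<le> (1 - a) * real b2" using le a1 by (intro mult_left_mono) auto
      then have "Ec - a * Ec \<le> real b2 - a * real b2" by (simp add: algebra_simps)
      moreover have "U2 C ?s1 \<tau>2 = Ec - U1 C ?s1 \<tau>2" unfolding U2_eq Ec_def ..
      moreover have "U2 C ?s1 ?s2 = real b2 - a * real b2" unfolding U2_eq ec2 eq a_def by simp
      ultimately show "U2 C ?s1 \<tau>2 \<le> U2 C ?s1 ?s2" using g2 by linarith
    qed
    show "nash_eq V E C b1 b2 ?s1 ?s2 \<and> U1 C ?s1 ?s2 = real b1 * real b2 / real n"
      unfolding nash_eq_def using m1 m2 p1 p2 eq by blast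
  qed
  obtain xs where xs: "distinct xs" "is_min_set_cover V E C (set xs)" using exists_min_cover[OF dm] by blast
  obtain ys where ys: "distinct ys" "is_max_set_packing V E C (set ys)" using exists_max_packing[OF dm] by blast
  note k = key[OF xs ys]
  let ?s1 = "cyclic_strategy xs b1" and ?s2 = "cyclic_strategy ys b2"
  have m1: "mixed (strat1 V b1) ?s1" using cyc_mixed1 k by blast
  have m2: "mixed (strat2 E b2) ?s2" using cyc_mixed2 k by blast
  have ec2: "measure_pmf.expectation ?s2 (\<lambda>T. real (card T)) = real b2"
    using cyc_card_exp[OF ys(1)] k b2n by simp
  have part2: "\<And>\<sigma>1 \<sigma>2. nash_eq V E C b1 b2 \<sigma>1 \<sigma>2 \<Longrightarrow>
             U1 C \<sigma>1 \<sigma>2 = real b1 * real b2 / real n \<and>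
             U2 C \<sigma>1 \<sigma>2 = real b2 * (1 - real b1 / real n) \<and>
             det_rate C \<sigma>1 \<sigma>2 = real b1 / real n"
  proof -
    fix \<sigma>1 \<sigma>2 assume ne: "nash_eq V E C b1 b2 \<sigma>1 \<sigma>2"
    have t1: "mixed (strat1 V b1) \<sigma>1" and t2: "mixed (strat2 E b2) \<sigma>2"
      and br1: "U1 C ?s1 \<sigma>2 \<le> U1 C \<sigma>1 \<sigma>2" and br2: "U2 C \<sigma>1 ?s2 \<le> U2 C \<sigma>1 \<sigma>2"
      using ne m1 m2 unfolding nash_eq_def by auto
    define Ec where "Ec = measure_pmf.expectation \<sigma>2 (\<lambda>T. real (card T))"
    have g2: "a * Ec \<le> U1 C ?s1 \<sigma>2" using G2[OF dm xs(1), of b1 b2 \<sigma>2] k b1n t2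
      unfolding Ec_def a_def by simp
    have g1: "U1 C \<sigma>1 ?s2 \<le> a * real b2" using G1[OF dm ys(1) _ _ _ t1] k b2n
      unfolding a_def by simp
    have le: "Ec \<le> real b2" using card_exp_le[OF fE t2] unfolding Ec_def .
    have u2a: "U2 C \<sigma>1 \<sigma>2 = Ec - U1 C \<sigma>1 \<sigma>2" unfolding U2_eq Ec_def ..
    have u2b: "U2 C \<sigma>1 ?s2 = real b2 - U1 C \<sigma>1 ?s2" unfolding U2_eq ec2 ..
    have "(1 - a) * real b2 \<le> (1 - a) * Ec"
    proof -
      have "real b2 - a * real b2 \<le> Ec - a * Ec" using br1 br2 g1 g2 u2a u2b by linarith
      then show ?thesis by (simp add: algebra_simps)
    qed
    then have "real b2 \<le> Ec" using a1 by (simp add: mult_le_cancel_left_pos)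
    then have Eceq: "Ec = real b2" using le by simp
    have U1eq: "U1 C \<sigma>1 \<sigma>2 = a * real b2"
    proof -
      have g2': "a * real b2 \<le> U1 C ?s1 \<sigma>2" using g2 Eceq by simp
      have u2a': "U2 C \<sigma>1 \<sigma>2 = real b2 - U1 C \<sigma>1 \<sigma>2" using u2a Eceq by simp
      show ?thesis using br1 br2 g1 g2' u2a' u2b by linarith
    qed
    have f2: "finite (set_pmf \<sigma>2)" using mixed_finite[OF strat2_finite[OF fE] t2] .
    have cardeq: "\<And>T. T \<in> set_pmf \<sigma>2 \<Longrightarrow> card T = b2"
    proof -
      fix T assume T: "T \<in> set_pmf \<sigma>2"
      have cle: "\<And>T. T \<in> set_pmf \<sigma>2 \<Longrightarrow> card T \<le> b2" using t2 unfolding mixed_def strat2_def by auto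
      have "measure_pmf.expectation \<sigma>2 (\<lambda>T. real b2 - real (card T)) = real b2 - Ec"
        unfolding Ec_def by (subst Bochner_Integration.integral_diff) (auto simp: integrable_measure_pmf_finite f2)
      then have "(\<Sum>T\<in>set_pmf \<sigma>2. (real b2 - real (card T)) * pmf \<sigma>2 T) = 0"
        using Eceq integral_measure_pmf_real[OF f2, of \<sigma>2 "\<lambda>T. real b2 - real (card T)"] by simp
      moreover have nn: "\<forall>T\<in>set_pmf \<sigma>2. 0 \<le> (real b2 - real (card T)) * pmf \<sigma>2 T"
      proof
        fix T assume "T \<in> set_pmf \<sigma>2"
        then have "real (card T) \<le> real b2" using cle by simp
        then show "0 \<le> (real b2 - real (card T)) * pmf \<sigma>2 T" by (simp add: pmf_nonneg)
      qed
      ultimately have "(real b2 - real (card T)) * pmf \<sigma>2 T = 0"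
        using sum_nonneg_eq_0_iff[OF f2 nn[rule_format]] T by simp
      moreover have "pmf \<sigma>2 T > 0" using T by (simp add: pmf_positive)
      ultimately show "card T = b2" using cle[OF T] by simp
    qed
    have "det_rate C \<sigma>1 \<sigma>2 = measure_pmf.expectation (pair_pmf \<sigma>1 \<sigma>2)
            (\<lambda>x. (case x of (S, T) \<Rightarrow> real (Fdet C S T)) / real b2)"
      unfolding det_rate_def by (rule exp_cong_pmf) (auto simp: cardeq)
    also have "\<dots> = U1 C \<sigma>1 \<sigma>2 / real b2" unfolding U1_def by simp
    also have "\<dots> = a" using U1eq assms(3) by simp
    finally have dr: "det_rate C \<sigma>1 \<sigma>2 = a" .
    show "U1 C \<sigma>1 \<sigma>2 = real b1 * real b2 / real n \<and>
             U2 C \<sigma>1 \<sigma>2 = real b2 * (1 - real b1 / real n) \<and>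
             det_rate C \<sigma>1 \<sigma>2 = real b1 / real n"
      using U1eq u2a Eceq dr unfolding a_def by (simp add: algebra_simps)
  qed
  show ?thesis using part1 part2 unfolding n_def by blast
qed

end
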